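(* Assume the language contains infinitely many atoms (of a given sort) and no restriction is placed on the atoms allowed in generalizations. Then anti-unification for nominal terms-in-context is of nullary type: there exist two terms-in-context $p_1,p_2$ that have no minimal complete set of generalizations (in particular, they have no least general generalization).
   Context: Nominal terms $t::=f(t_1,\dots,t_n)\mid a\mid a.t\mid \pi\cdot X$ over sorted atoms $a,b,\dots$, variables $X,Y,\dots$ and function symbols; $\pi$ ranges over permutations (finite sequences of swappings $(a\,b)$ of same-sorted atoms), $\pi\bullet t$ is the swapping action, substitutions $\sigma$ map variables to terms (application allows atom capture and $(\pi\cdot X)\sigma=\pi\bullet(X\sigma)$). A freshness context is a finite set of constraints $a\# X$; $\nabla\vdash a\# t$ and $\nabla\vdash t\approx t'$ are the standard nominal freshness and $\alpha$-equivalence judgments (Urban–Pitts–Gabbay): $\nabla\vdash a\approx a$; $\nabla\vdash a.t\approx a.t'$ if $\nabla\vdash t\approx t'$; $\nabla\vdash a.t\approx a'.t'$ if $a\neq a'$, $\nabla\vdash t\approx(a\,a')\bullet t'$ and $\nabla\vdash a\# t'$; $\nabla\vdash\pi\cdot X\approx\pi'\cdot X$ if $a\# X\in\nabla$ for all $a$ with $\pi\bullet a\neq\pi'\bullet a$; applications componentwise; $\nabla\vdash a\# a'$ if $a\ne a'$; $\nabla\vdash a\#\pi\cdot X$ if $\pi^{-1}\bullet a\# X\in\nabla$; $a\#$ distributes over applications; $\nabla\vdash a\# a.t$; $\nabla\vdash a\# a'.t$ if $a\ne a'$ and $\nabla\vdash a\# t$. For a freshness context $\nabla$ and substitution $\sigma$,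 $\nabla\sigma$ is the minimal freshness context $\Delta$ with $\Delta\vdash a\# X\sigma$ for all $a\# X\in\nabla$ (computed by the standard simplification of freshness formulas; undefined/$\bot$ if none exists). $\sigma$ respects $\nabla$ if for all $X$, no atom $a$ with $a\# X\in\nabla$ occurs free in $X\sigma$ outside suspensions. A term-in-context is a pair $\langle\nabla,t\rangle$. $\langle\nabla_1,t_1\rangle\preceq\langle\nabla_2,t_2\rangle$ if there is a substitution $\sigma$ respecting $\nabla_1$ with $\nabla_1\sigma\subseteq\nabla_2$ and $\nabla_2\vdash t_1\sigma\approx t_2$. A generalization of $p_1,p_2$ is a term-in-context $p$ with $p\preceq p_1$ and $p\preceq p_2$. A complete set of generalizations of $p_1,p_2$ is a set $G$ of generalizations such that every generalization $p$ of $p_1,p_2$ satisfies $p\preceq q$ for some $q\in G$; it is minimal if no two distinct elements of $G$ are related by $\preceq$. Anti-unification is of nullary type if some pair of terms-in-context has no minimal complete set of generalizations. *)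

theory Defs
  imports Main
begin

text \<open>Nominal terms over atoms 'a, function symbols 'f and variables 'v.
  A permutation is a finite list of swappings; (a,b) is the swapping (a b).\<close>

type_synonym 'a perm = "('a \<times> 'a) list"

datatype ('a, 'f, 'v) ntrm =
    Fn 'f "('a, 'f, 'v) ntrm list"
  | At 'a
  | Ab 'a "('a, 'f, 'v) ntrm"
  | Su "'a perm" 'v

definition swap_atom :: "'a \<times> 'a \<Rightarrow> 'a \<Rightarrow> 'a" where
  "swap_atom s c = (if c = fst s then snd s else if c = snd s then fst s else c)"

text \<open>Action of pi = (a1 b1)...(an bn) on an atom: rightmost swapping first.\<close>
definition perm_atom :: "'a perm \<Rightarrow> 'a \<Rightarrow> 'a" where
  "perm_atom pi c = foldr swap_atom pi c"

definition perm_inv :: "'a perm \<Rightarrow> 'a perm" where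
  "perm_inv pi = rev pi"

fun perm_trm :: "'a perm \<Rightarrow> ('a, 'f, 'v) ntrm \<Rightarrow> ('a, 'f, 'v) ntrm" where
  "perm_trm pi (Fn f ts) = Fn f (map (perm_trm pi) ts)"
| "perm_trm pi (At a) = At (perm_atom pi a)"
| "perm_trm pi (Ab a t) = Ab (perm_atom pi a) (perm_trm pi t)"
| "perm_trm pi (Su pi' X) = Su (pi @ pi') X"

fun wf_trm :: "('a \<Rightarrow> 's) \<Rightarrow> ('a, 'f, 'v) ntrm \<Rightarrow> bool" where
  "wf_trm srt (Fn f ts) = (\<forall>t\<in>set ts. wf_trm srt t)"
| "wf_trm srt (At a) = True"
| "wf_trm srt (Ab a t) = wf_trm srt t"
| "wf_trm srt (Su pi X) = (\<forall>(a, b)\<in>set pi. srt a = srt b)"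

text \<open>Substitution application (atom capture allowed).\<close>
fun subst :: "('v \<Rightarrow> ('a, 'f, 'v) ntrm) \<Rightarrow> ('a, 'f, 'v) ntrm \<Rightarrow> ('a, 'f, 'v) ntrm" where
  "subst \<sigma> (Fn f ts) = Fn f (map (subst \<sigma>) ts)"
| "subst \<sigma> (At a) = At a"
| "subst \<sigma> (Ab a t) = Ab a (subst \<sigma> t)"
| "subst \<sigma> (Su pi X) = perm_trm pi (\<sigma> X)"

text \<open>Freshness contexts: sets of constraints a # X, represented by pairs (a, X).\<close>
type_synonym ('a, 'v) fctx = "('a \<times> 'v) set"

fun fresh :: "('a, 'v) fctx \<Rightarrow> 'a \<Rightarrow> ('a, 'f, 'v) ntrm \<Rightarrow> bool" where
  "fresh N a (Fn f ts) = (\<forall>t\<in>set ts. fresh N a t)"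
| "fresh N a (At a') = (a \<noteq> a')"
| "fresh N a (Ab a' t) = (a = a' \<or> fresh N a t)"
| "fresh N a (Su pi X) = ((perm_atom (perm_inv pi) a, X) \<in> N)"

inductive aeq :: "('a, 'v) fctx \<Rightarrow> ('a, 'f, 'v) ntrm \<Rightarrow> ('a, 'f, 'v) ntrm \<Rightarrow> bool"
  for N :: "('a, 'v) fctx" where
  aeq_At: "aeq N (At a) (At a)"
| aeq_Ab1: "aeq N t t' \<Longrightarrow> aeq N (Ab a t) (Ab a t')"
| aeq_Ab2: "a \<noteq> a' \<Longrightarrow> aeq N t (perm_trm [(a, a')] t') \<Longrightarrow> fresh N a t'
             \<Longrightarrow> aeq N (Ab a t) (Ab a' t')"
| aeq_Su: "(\<forall>c. perm_atom pi c \<noteq> perm_atom pi' c \<longrightarrow> (c, X) \<in> N)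
             \<Longrightarrow> aeq N (Su pi X) (Su pi' X)"
| aeq_Fn: "list_all2 (aeq N) ts ts' \<Longrightarrow> aeq N (Fn f ts) (Fn f ts')"

fun fa :: "('a, 'f, 'v) ntrm \<Rightarrow> 'a set" where
  "fa (Fn f ts) = (\<Union>t\<in>set ts. fa t)"
| "fa (At a) = {a}"
| "fa (Ab a t) = fa t - {a}"
| "fa (Su pi X) = {}"

definition respects_ctx :: "('a, 'v) fctx \<Rightarrow> ('v \<Rightarrow> ('a, 'f, 'v) ntrm) \<Rightarrow> bool" where
  "respects_ctx N \<sigma> = (\<forall>(a, X)\<in>N. a \<notin> fa (\<sigma> X))"

text \<open>D is nabla sigma: the minimal freshness context entailing a # X sigma
  for all a # X in nabla (it does not exist when no context entails these).\<close>
definition ctx_subst :: "('a, 'v) fctx \<Rightarrow> ('v \<Rightarrow> ('a, 'f, 'v) ntrm) \<Rightarrow> ('a, 'v) fctx \<Rightarrow> bool" where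
  "ctx_subst N \<sigma> D =
     (finite D \<and> (\<forall>(a, X)\<in>N. fresh D a (\<sigma> X)) \<and>
      (\<forall>D'. (\<forall>(a, X)\<in>N. fresh D' a (\<sigma> X)) \<longrightarrow> D \<subseteq> D'))"

type_synonym ('a, 'f, 'v) tic = "('a, 'v) fctx \<times> ('a, 'f, 'v) ntrm"

definition is_tic :: "('a \<Rightarrow> 's) \<Rightarrow> ('a, 'f, 'v) tic \<Rightarrow> bool" where
  "is_tic srt p = (finite (fst p) \<and> wf_trm srt (snd p))"

definition tic_leq :: "('a \<Rightarrow> 's) \<Rightarrow> ('a, 'f, 'v) tic \<Rightarrow> ('a, 'f, 'v) tic \<Rightarrow> bool" where
  "tic_leq srt p q =
     (\<exists>\<sigma>. (\<forall>X. wf_trm srt (\<sigma> X)) \<and> respects_ctx (fst p) \<sigma> \<and>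
          (\<exists>D. ctx_subst (fst p) \<sigma> D \<and> D \<subseteq> fst q) \<and>
          aeq (fst q) (subst \<sigma> (snd p)) (snd q))"

definition is_generalization ::
  "('a \<Rightarrow> 's) \<Rightarrow> ('a, 'f, 'v) tic \<Rightarrow> ('a, 'f, 'v) tic \<Rightarrow> ('a, 'f, 'v) tic \<Rightarrow> bool" where
  "is_generalization srt p1 p2 p = (is_tic srt p \<and> tic_leq srt p p1 \<and> tic_leq srt p p2)"

definition complete_gen_set ::
  "('a \<Rightarrow> 's) \<Rightarrow> ('a, 'f, 'v) tic \<Rightarrow> ('a, 'f, 'v) tic \<Rightarrow> ('a, 'f, 'v) tic set \<Rightarrow> bool" where
  "complete_gen_set srt p1 p2 G =
     ((\<forall>q\<in>G. is_generalization srt p1 p2 q) \<and>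
      (\<forall>p. is_generalization srt p1 p2 p \<longrightarrow> (\<exists>q\<in>G. tic_leq srt p q)))"

definition minimal_complete_gen_set ::
  "('a \<Rightarrow> 's) \<Rightarrow> ('a, 'f, 'v) tic \<Rightarrow> ('a, 'f, 'v) tic \<Rightarrow> ('a, 'f, 'v) tic set \<Rightarrow> bool" where
  "minimal_complete_gen_set srt p1 p2 G =
     (complete_gen_set srt p1 p2 G \<and>
      (\<forall>q\<in>G. \<forall>q'\<in>G. q \<noteq> q' \<longrightarrow> \<not> tic_leq srt q q'))"

end

theory Submission
  imports Defs
begin

lemma perm_append: "perm_atom (xs @ ys) c = perm_atom xs (perm_atom ys c)"
  by (simp add: perm_atom_def)

lemma perm_nil[simp]: "perm_atom [] c = c"
  by (simp add: perm_atom_def)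

lemma swap_swap[simp]: "swap_atom s (swap_atom s c) = c"
  by (auto simp: swap_atom_def)

lemma perm_inv_l[simp]: "perm_atom (rev r) (perm_atom r c) = c"
  by (induction r arbitrary: c) (simp_all add: perm_atom_def)

lemma perm_inv_r[simp]: "perm_atom r (perm_atom (rev r) c) = c"
  using perm_inv_l[of "rev r" c] by simp

lemma aeq_Su_inv:
  assumes "aeq N t (Su p X)"
  shows "\<exists>p'. t = Su p' X \<and> (\<forall>c. perm_atom p' c \<noteq> perm_atom p c \<longrightarrow> (c, X) \<in> N)"
  using assms by (cases rule: aeq.cases) auto

lemma aeq_At_inv:
  assumes "aeq N t (At a)" shows "t = At a"
  using assms by (cases rule: aeq.cases) auto

lemma leq_Su_D:
  fixes srt :: "'a \<Rightarrow> 's" and N1 N2 :: "('a, 'v) fctx" and p1 p2 :: "'a perm" and X1 X2 :: 'v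
  assumes "tic_leq srt (N1, Su p1 X1 :: ('a, 'f, 'v) ntrm) (N2, Su p2 X2)"
  shows "\<exists>r. (\<forall>(x, y)\<in>set r. srt x = srt y) \<and>
     (\<forall>c. (c, X1) \<in> N1 \<longrightarrow> (perm_atom (rev r) c, X2) \<in> N2) \<and>
     (\<forall>c. perm_atom (p1 @ r) c \<noteq> perm_atom p2 c \<longrightarrow> (c, X2) \<in> N2)"
proof -
  obtain \<sigma> :: "'v \<Rightarrow> ('a, 'f, 'v) ntrm" and D where w: "\<forall>X. wf_trm srt (\<sigma> X)" and cs: "ctx_subst N1 \<sigma> D" and DN: "D \<subseteq> N2"
    and ae: "aeq N2 (perm_trm p1 (\<sigma> X1)) (Su p2 X2)"
    using assms unfolding tic_leq_def by auto
  obtain p' where pe: "perm_trm p1 (\<sigma> X1) = Su p' X2"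
    and pc: "\<forall>c. perm_atom p' c \<noteq> perm_atom p2 c \<longrightarrow> (c, X2) \<in> N2"
    using aeq_Su_inv[OF ae] by blast
  obtain r where r: "\<sigma> X1 = Su r X2" "p' = p1 @ r"
    using pe by (cases "\<sigma> X1") auto
  have "\<forall>(x, y)\<in>set r. srt x = srt y" using w[rule_format, of X1] r by simp
  moreover have "\<forall>c. (c, X1) \<in> N1 \<longrightarrow> (perm_atom (rev r) c, X2) \<in> N2"
  proof (intro allI impI)
    fix c assume "(c, X1) \<in> N1"
    hence "fresh D c (\<sigma> X1)" using cs unfolding ctx_subst_def by auto
    thus "(perm_atom (rev r) c, X2) \<in> N2" using DN r by (auto simp: perm_inv_def)
  qed
  ultimately show ?thesis using pc r by blast
qed

lemma leq_Su_I:
  fixes srt :: "'a \<Rightarrow> 's" and N1 N2 :: "('a, 'v) fctx" and X1 X2 :: 'v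
  assumes fin: "finite N1" and wf: "\<forall>(x, y)\<in>set r. srt x = srt y"
    and h1: "\<forall>c. (c, X1) \<in> N1 \<longrightarrow> (perm_atom (rev r) c, X2) \<in> N2"
    and h2: "\<forall>c. perm_atom (p1 @ r) c \<noteq> perm_atom p2 c \<longrightarrow> (c, X2) \<in> N2"
  shows "tic_leq srt (N1, Su p1 X1 :: ('a, 'f, 'v) ntrm) (N2, Su p2 X2)"
proof -
  define \<sigma> :: "_ \<Rightarrow> ('a, 'f, 'v) ntrm" where "\<sigma> = (\<lambda>Y. if Y = X1 then Su r X2 else Fn undefined [])"
  define D where "D = (\<lambda>c. (perm_atom (rev r) c, X2)) ` {c. (c, X1) \<in> N1}"
  have fD: "finite D" unfolding D_def
    by (rule finite_imageI, rule finite_subset[of _ "fst ` N1"]) (use fin in force)+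
  have "ctx_subst N1 \<sigma> D"
    unfolding ctx_subst_def using fD by (auto simp: \<sigma>_def D_def perm_inv_def)
  moreover have "D \<subseteq> N2" using h1 by (auto simp: D_def)
  moreover have "\<forall>X. wf_trm srt (\<sigma> X)" using wf by (simp add: \<sigma>_def)
  moreover have "respects_ctx N1 \<sigma>" by (auto simp: respects_ctx_def \<sigma>_def)
  moreover have "aeq N2 (subst \<sigma> (Su p1 X1)) (Su p2 X2)"
    using h2 by (auto simp: \<sigma>_def intro!: aeq_Su)
  ultimately show ?thesis unfolding tic_leq_def by auto
qed

lemma leq_At_D:
  fixes srt :: "'a \<Rightarrow> 's" and N :: "('a, 'v) fctx" and X :: 'v
  assumes "tic_leq srt (N, Su p X :: ('a, 'f, 'v) ntrm) ({}, At a)" and "(d, X) \<in> N"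
  shows "d \<noteq> perm_atom (rev p) a"
proof -
  obtain \<sigma> :: "'v \<Rightarrow> ('a, 'f, 'v) ntrm" where r: "respects_ctx N \<sigma>" and ae: "aeq {} (perm_trm p (\<sigma> X)) (At a)"
    using assms unfolding tic_leq_def by auto
  have "perm_trm p (\<sigma> X) = At a" using aeq_At_inv[OF ae] .
  then obtain a' where "\<sigma> X = At a'" "perm_atom p a' = a" by (cases "\<sigma> X") auto
  moreover have "d \<notin> fa (\<sigma> X)" using r assms(2) unfolding respects_ctx_def by auto
  ultimately show ?thesis by auto
qed

lemma leq_At_I:
  fixes srt :: "'a \<Rightarrow> 's" and N :: "('a, 'v) fctx" and X :: 'v
  assumes "\<forall>d. (d, X) \<in> N \<longrightarrow> d \<noteq> perm_atom (rev p) a"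
  shows "tic_leq srt (N, Su p X :: ('a, 'f, 'v) ntrm) ({}, At a)"
proof -
  define \<sigma> :: "_ \<Rightarrow> ('a, 'f, 'v) ntrm" where "\<sigma> = (\<lambda>Y. if Y = X then At (perm_atom (rev p) a) else Fn undefined [])"
  have "ctx_subst N \<sigma> {}" unfolding ctx_subst_def using assms by (auto simp: \<sigma>_def)
  moreover have "\<forall>X. wf_trm srt (\<sigma> X)" by (simp add: \<sigma>_def)
  moreover have "respects_ctx N \<sigma>" using assms by (auto simp: respects_ctx_def \<sigma>_def)
  moreover have "aeq {} (subst \<sigma> (Su p X)) (At a)"
    by (auto simp: \<sigma>_def intro: aeq_At)
  ultimately show ?thesis unfolding tic_leq_def by auto
qed

lemma gen_form:
  assumes "tic_leq srt (N, t) ({}, At a)" "tic_leq srt (N, t) ({}, At b)" "a \<noteq> b"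
  shows "\<exists>p X. t = Su p X"
proof -
  obtain \<sigma> where ae: "aeq {} (subst \<sigma> t) (At a)" using assms(1) unfolding tic_leq_def by auto
  obtain \<tau> where ae2: "aeq {} (subst \<tau> t) (At b)" using assms(2) unfolding tic_leq_def by auto
  show ?thesis using aeq_At_inv[OF ae] aeq_At_inv[OF ae2] assms(3) by (cases t) auto
qed

lemma leq_trans_Su:
  assumes fin: "finite N1"
    and "tic_leq srt (N1, Su p1 X1) (N2, Su p2 X2)"
    and "tic_leq srt (N2, Su p2 X2) (N3, Su p3 X3)"
  shows "tic_leq srt (N1, Su p1 X1) (N3, Su p3 X3)"
proof -
  obtain r1 where w1: "\<forall>(x, y)\<in>set r1. srt x = srt y"
    and a1: "\<forall>c. (c, X1) \<in> N1 \<longrightarrow> (perm_atom (rev r1) c, X2) \<in> N2"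
    and b1: "\<forall>c. perm_atom (p1 @ r1) c \<noteq> perm_atom p2 c \<longrightarrow> (c, X2) \<in> N2"
    using leq_Su_D[OF assms(2)] by blast
  obtain r2 where w2: "\<forall>(x, y)\<in>set r2. srt x = srt y"
    and a2: "\<forall>c. (c, X2) \<in> N2 \<longrightarrow> (perm_atom (rev r2) c, X3) \<in> N3"
    and b2: "\<forall>c. perm_atom (p2 @ r2) c \<noteq> perm_atom p3 c \<longrightarrow> (c, X3) \<in> N3"
    using leq_Su_D[OF assms(3)] by blast
  show ?thesis
  proof (rule leq_Su_I[OF fin, of "r1 @ r2"])
    show "\<forall>(x, y)\<in>set (r1 @ r2). srt x = srt y" using w1 w2 by auto
    show "\<forall>c. (c, X1) \<in> N1 \<longrightarrow> (perm_atom (rev (r1 @ r2)) c, X3) \<in> N3"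
      using a1 a2 by (simp add: perm_append)
    show "\<forall>c. perm_atom (p1 @ r1 @ r2) c \<noteq> perm_atom p3 c \<longrightarrow> (c, X3) \<in> N3"
    proof (intro allI impI)
      fix c assume ne: "perm_atom (p1 @ r1 @ r2) c \<noteq> perm_atom p3 c"
      define d where "d = perm_atom r2 c"
      show "(c, X3) \<in> N3"
      proof (cases "perm_atom p2 d = perm_atom p3 c")
        case False thus ?thesis using b2 by (simp add: perm_append d_def)
      next
        case True
        hence "perm_atom (p1 @ r1) d \<noteq> perm_atom p2 d" using ne by (simp add: perm_append d_def)
        hence "(d, X2) \<in> N2" using b1 by blast
        thus ?thesis using a2 by (force simp: d_def)
      qed
    qed
  qed
qed

theorem theorem2:
  fixes srt :: "'a \<Rightarrow> 's" and s :: 's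
  assumes "infinite {a :: 'a. srt a = s}"
    and "infinite (UNIV :: 'v set)"
  shows "\<exists>(p1 :: ('a, 'f, 'v) tic) p2.
           is_tic srt p1 \<and> is_tic srt p2 \<and>
           \<not> (\<exists>G. minimal_complete_gen_set srt p1 p2 G)"
proof -
  have infA: "infinite (UNIV :: 'a set)" using infinite_super[OF subset_UNIV assms(1)] .
  obtain a :: 'a where True by blast
  have "finite {a}" by simp
  then obtain b :: 'a where "b \<notin> {a}" using ex_new_if_finite[OF infA] by blast
  hence ab: "b \<noteq> a" by simp
  define p1 :: "('a, 'f, 'v) tic" where "p1 = ({}, At a)"
  define p2 :: "('a, 'f, 'v) tic" where "p2 = ({}, At b)"
  have t1: "is_tic srt p1" "is_tic srt p2" by (auto simp: is_tic_def p1_def p2_def)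
  have "\<not> (\<exists>G. minimal_complete_gen_set srt p1 p2 G)"
  proof
    assume "\<exists>G. minimal_complete_gen_set srt p1 p2 G"
    then obtain G where cG: "\<forall>q\<in>G. is_generalization srt p1 p2 q"
      and cmp: "\<forall>p. is_generalization srt p1 p2 p \<longrightarrow> (\<exists>q\<in>G. tic_leq srt p q)"
      and mn: "\<forall>q\<in>G. \<forall>q'\<in>G. q \<noteq> q' \<longrightarrow> \<not> tic_leq srt q q'"
      unfolding minimal_complete_gen_set_def complete_gen_set_def by blast
    have "is_generalization srt p1 p2 ({}, Su [] undefined)"
      unfolding is_generalization_def p1_def p2_def
      by (auto simp: is_tic_def intro!: leq_At_I)
    then obtain q where qG: "q \<in> G" using cmp by blast
    obtain N t where qe: "q = (N, t)" by (cases q)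
    have gq: "is_generalization srt p1 p2 (N, t)" using cG qG qe by simp
    then obtain p X where te: "t = Su p X"
      using gen_form[of srt N t a b] ab unfolding is_generalization_def p1_def p2_def by auto
    have finN: "finite N" and wfp: "wf_trm srt (Su p X)"
      using gq te unfolding is_generalization_def is_tic_def by auto
    have la: "tic_leq srt (N, Su p X :: ('a, 'f, 'v) ntrm) ({}, At a)" and lb: "tic_leq srt (N, Su p X :: ('a, 'f, 'v) ntrm) ({}, At b)"
      using gq te unfolding is_generalization_def p1_def p2_def by auto
    have "finite (fst ` N \<union> {perm_atom (rev p) a, perm_atom (rev p) b})" using finN by simp
    then obtain c where c: "c \<notin> fst ` N \<union> {perm_atom (rev p) a, perm_atom (rev p) b}"
      using ex_new_if_finite[OF infA] by blast
    define N' where "N' = insert (c, X) N"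
    have finN': "finite N'" using finN by (simp add: N'_def)
    have gp: "is_generalization srt p1 p2 (N', Su p X)"
      unfolding is_generalization_def p1_def p2_def
      using wfp finN' c leq_At_D[OF la] leq_At_D[OF lb]
      by (auto simp: is_tic_def N'_def intro!: leq_At_I)
    have qp: "tic_leq srt (N, Su p X :: ('a, 'f, 'v) ntrm) (N', Su p X)"
      by (rule leq_Su_I[OF finN, of "[]"]) (auto simp: N'_def)
    obtain q' where q'G: "q' \<in> G" and pq': "tic_leq srt (N', Su p X :: ('a, 'f, 'v) ntrm) q'" using cmp gp by blast
    obtain N2 t2 where q'e: "q' = (N2, t2)" by (cases q')
    have gq': "is_generalization srt p1 p2 (N2, t2)" using cG q'G q'e by simp
    then obtain p2' X2 where t2e: "t2 = Su p2' X2"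
      using gen_form[of srt N2 t2 a b] ab unfolding is_generalization_def p1_def p2_def by auto
    have "tic_leq srt (N, Su p X :: ('a, 'f, 'v) ntrm) q'"
      using leq_trans_Su[OF finN qp] pq' q'e t2e by simp
    hence "tic_leq srt q q'" using qe te by simp
    hence "q' = q" using mn[rule_format, OF qG q'G] by (cases "q = q'") auto
    hence pq: "tic_leq srt (N', Su p X :: ('a, 'f, 'v) ntrm) (N, Su p X)" using pq' qe te by simp
    obtain r where hr: "\<forall>d. (d, X) \<in> N' \<longrightarrow> (perm_atom (rev r) d, X) \<in> N"
      using leq_Su_D[OF pq] by blast
    define S where "S = {d. (d, X) \<in> N}"
    define S' where "S' = {d. (d, X) \<in> N'}"
    have finS: "finite S" unfolding S_def
      by (rule finite_subset[of _ "fst ` N"]) (use finN in force)+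
    have "S' = insert c S" "c \<notin> S" using c by (auto simp: S'_def S_def N'_def image_iff)
    hence cS': "card S' = Suc (card S)" using finS by simp
    have "inj_on (perm_atom (rev r)) S'"
      by (rule inj_onI) (metis perm_inv_r)
    moreover have "perm_atom (rev r) ` S' \<subseteq> S" using hr by (auto simp: S'_def S_def)
    ultimately have "card S' \<le> card S" using finS card_inj_on_le by blast
    thus False using cS' by simp
  qed
  thus ?thesis using t1 by blast
qed

end
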